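(* Let $1\leq s\leq r\leq n$ and $d=n+r+2$. For a general $n$-tuple $(A_1,\dots,A_n)\in X^{n,r,s}$, the corresponding local algebra has socle dimension $r-s+1$; equivalently $\dim_{\mathbb{K}}\bigcap_{i=1}^n\ker A_i=r-s+1$.
   Context: $\mathbb{K}$ is algebraically closed of characteristic zero. $X^{n,r,s}$ is the set of $n$-tuples $(A_1,\dots,A_n)$ of pairwise commuting $d\times d$ matrices over $\mathbb{K}$ for which there is a basis of $\mathbb{K}^d$ in which each $A_i$ has the block form $$A_i=\begin{bmatrix}0 & b_i^T & c_i^T & 0\\ 0&0&D_i&0\\ 0&0&0&f_i\\ 0&0&0&0\end{bmatrix}$$ with diagonal blocks of sizes $1,r,n,1$, where $b_i\in\mathbb{K}^r$, $c_i,f_i\in\mathbb{K}^n$, $D_i\in\mathbb{K}^{r\times n}$, such that $f_1,\dots,f_n$ are linearly independent, $\bigcap_i\ker D_i^T=0$, and $\dim\operatorname{Span}\{b_1,\dots,b_n\}=s$. Such a tuple has a cyclic vector $v$ (the last basis vector) and corresponds to the local algebra $R/I$, $R=\mathbb{K}[\alpha_1,\dots,\alpha_n]$, where $I$ is the kernel of $f\mapsto f(A_1,\dots,A_n)v$; its socle dimension equals $\dim\bigcap_i\ker A_i$. "General" means: for all tuples in a nonempty open subset of $X^{n,r,s}$. *)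

theory Defs
  imports "Jordan_Normal_Form.Matrix_Kernel" "Jordan_Normal_Form.VS_Connect"
          "HOL-Computational_Algebra.Polynomial"
begin

definition subspace_dim :: "nat \<Rightarrow> 'a::field vec set \<Rightarrow> nat" where
  "subspace_dim m W = vectorspace.dim class_ring ((module_vec TYPE('a) m)\<lparr>carrier := W\<rparr>)"

definition vspan :: "nat \<Rightarrow> 'a::field vec set \<Rightarrow> 'a vec set" where
  "vspan m S = LinearCombinations.module.span class_ring (module_vec TYPE('a) m) S"

definition lin_indep_family :: "nat \<Rightarrow> 'a::field vec list \<Rightarrow> bool" where
  "lin_indep_family m vs \<longleftrightarrow> set vs \<subseteq> carrier_vec m \<and> distinct vs \<and>
     \<not> LinearCombinations.module.lin_dep class_ring (module_vec TYPE('a) m) (set vs)"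

text \<open>Indices 0..d-1 with d = n+r+2: block 1 = {0}, block 2 = {1..r},
  block 3 = {r+1..r+n}, block 4 = {r+n+1}.\<close>

definition block_shape :: "nat \<Rightarrow> nat \<Rightarrow> 'a::field mat \<Rightarrow> bool" where
  "block_shape n r B \<longleftrightarrow> B \<in> carrier_mat (n+r+2) (n+r+2) \<and>
     (\<forall>j<n+r+2. \<forall>k<n+r+2. B $$ (j,k) \<noteq> 0 \<longrightarrow>
        (j = 0 \<and> 1 \<le> k \<and> k \<le> r + n) \<or>
        (1 \<le> j \<and> j \<le> r \<and> r + 1 \<le> k \<and> k \<le> r + n) \<or>
        (r + 1 \<le> j \<and> j \<le> r + n \<and> k = r + n + 1))"

definition blk_b :: "nat \<Rightarrow> nat \<Rightarrow> 'a::field mat \<Rightarrow> 'a vec" where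
  "blk_b n r B = vec r (\<lambda>k. B $$ (0, 1 + k))"

definition blk_c :: "nat \<Rightarrow> nat \<Rightarrow> 'a::field mat \<Rightarrow> 'a vec" where
  "blk_c n r B = vec n (\<lambda>k. B $$ (0, r + 1 + k))"

definition blk_D :: "nat \<Rightarrow> nat \<Rightarrow> 'a::field mat \<Rightarrow> 'a mat" where
  "blk_D n r B = mat r n (\<lambda>(j,k). B $$ (1 + j, r + 1 + k))"

definition blk_f :: "nat \<Rightarrow> nat \<Rightarrow> 'a::field mat \<Rightarrow> 'a vec" where
  "blk_f n r B = vec n (\<lambda>k. B $$ (r + 1 + k, r + n + 1))"

definition commuting_tuple :: "'a::field mat list \<Rightarrow> bool" where
  "commuting_tuple As \<longleftrightarrow> (\<forall>i<length As. \<forall>j<length As. As!i * As!j = As!j * As!i)"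

definition X_nrs :: "nat \<Rightarrow> nat \<Rightarrow> nat \<Rightarrow> 'a::field mat list set" where
  "X_nrs n r s = {As. length As = n \<and>
     (\<forall>i<n. As!i \<in> carrier_mat (n+r+2) (n+r+2)) \<and> commuting_tuple As \<and>
     (\<exists>P Pinv. P \<in> carrier_mat (n+r+2) (n+r+2) \<and> Pinv \<in> carrier_mat (n+r+2) (n+r+2) \<and>
        P * Pinv = 1\<^sub>m (n+r+2) \<and> Pinv * P = 1\<^sub>m (n+r+2) \<and>
        (let Bs = map (\<lambda>A. Pinv * A * P) As in
          (\<forall>i<n. block_shape n r (Bs!i)) \<and>
          lin_indep_family n (map (blk_f n r) Bs) \<and>
          (\<Inter>i\<in>{..<n}. mat_kernel (transpose_mat (blk_D n r (Bs!i)))) = {0\<^sub>v r} \<and>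
          subspace_dim r (vspan r (set (map (blk_b n r) Bs))) = s))}"

inductive_set polyfun :: "(('v \<Rightarrow> 'a::comm_ring_1) \<Rightarrow> 'a) set" where
  const: "(\<lambda>x. c) \<in> polyfun"
| var: "(\<lambda>x. x v) \<in> polyfun"
| add: "p \<in> polyfun \<Longrightarrow> q \<in> polyfun \<Longrightarrow> (\<lambda>x. p x + q x) \<in> polyfun"
| mult: "p \<in> polyfun \<Longrightarrow> q \<in> polyfun \<Longrightarrow> (\<lambda>x. p x * q x) \<in> polyfun"

definition zariski_open :: "(('v \<Rightarrow> 'a::comm_ring_1)) set \<Rightarrow> bool" where
  "zariski_open U \<longleftrightarrow> (\<exists>S \<subseteq> polyfun. U = {x. \<exists>p\<in>S. p x \<noteq> 0})"

definition tuple_coords :: "nat \<Rightarrow> nat \<Rightarrow> 'a::zero mat list \<Rightarrow> (nat \<times> nat \<times> nat \<Rightarrow> 'a)" where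
  "tuple_coords n d As = (\<lambda>(i,j,k). if i < n \<and> j < d \<and> k < d then As!i $$ (j,k) else 0)"

definition holds_generally :: "nat \<Rightarrow> nat \<Rightarrow> 'a::comm_ring_1 mat list set \<Rightarrow> ('a mat list \<Rightarrow> bool) \<Rightarrow> bool" where
  "holds_generally n d Y P \<longleftrightarrow> (\<exists>U. zariski_open U \<and>
      (\<exists>As\<in>Y. tuple_coords n d As \<in> U) \<and>
      (\<forall>As\<in>Y. tuple_coords n d As \<in> U \<longrightarrow> P As))"

end

theory Submission
  imports Defs "Jordan_Normal_Form.DL_Rank" "Jordan_Normal_Form.Gauss_Jordan_Elimination"
begin

lemma vsubI:
  fixes X :: "'a::field vec set"
  assumes "X \<subseteq> carrier_vec N" "0\<^sub>v N \<in> X" "\<And>v w. v\<in>X \<Longrightarrow> w\<in>X \<Longrightarrow> v+w\<in>X"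
    "\<And>c v. v\<in>X \<Longrightarrow> c \<cdot>\<^sub>v v \<in> X"
  shows "subspace class_ring X (module_vec TYPE('a) N)"
  unfolding subspace_def LinearCombinations.submodule_def
  using vec_vs[of N] vec_module[of N] assms by (auto simp: module_vec_simps class_ring_simps)

lemma sub_fin_dim:
  fixes X :: "'a::field vec set"
  assumes sub: "subspace class_ring X (module_vec TYPE('a) N)"
  shows "vectorspace.fin_dim class_ring ((module_vec TYPE('a) N)\<lparr>carrier := X\<rparr>)"
proof -
  interpret vec_space "TYPE('a)" N .
  interpret X: vectorspace class_ring "vs X" using subspace_is_vs[OF sub] .
  have subm: "LinearCombinations.submodule class_ring X V" using sub unfolding subspace_def by auto
  have bound: "finite S \<and> card S \<le> N" if "S \<subseteq> carrier (vs X) \<and> X.lin_indpt S" for S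
  proof -
    have "S \<subseteq> X" "X.lin_indpt S" using that by auto
    then have li: "lin_indpt S" using span_li_not_depend(2)[OF _ subm] by auto
    have SV: "S \<subseteq> carrier_vec N" using \<open>S \<subseteq> X\<close> subm unfolding LinearCombinations.submodule_def by auto
    show ?thesis using li_le_dim[OF fin_dim SV li] dim_is_n by auto
  qed
  have e: "{} \<subseteq> carrier (vs X) \<and> X.lin_indpt {}" by (simp add: X.lin_dep_def)
  obtain A where "finite A" "maximal A (\<lambda>S. S \<subseteq> carrier (vs X) \<and> X.lin_indpt S)"
    using maximal_exists[of "\<lambda>S. S \<subseteq> carrier (vs X) \<and> X.lin_indpt S" N "{}", OF bound e] by blast
  then have "X.basis A" by (intro X.max_li_is_basis)
  then show ?thesis unfolding X.fin_dim_def X.basis_def using \<open>finite A\<close> by auto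
qed

lemma dim_mono:
  fixes X W :: "'a::field vec set"
  assumes sX: "subspace class_ring X (module_vec TYPE('a) N)"
    and sW: "subspace class_ring W (module_vec TYPE('a) N)" and XW: "X \<subseteq> W"
  shows "subspace_dim N X \<le> subspace_dim N W"
proof -
  interpret vec_space "TYPE('a)" N .
  interpret W: vectorspace class_ring "vs W" using subspace_is_vs[OF sW] .
  have s: "subspace class_ring X (vs W)" by (rule nested_subspaces[OF sW sX XW])
  have "vectorspace.dim class_ring (W.vs X) \<le> W.dim"
    by (rule W.subspace_dim[OF s sub_fin_dim[OF sW]]) (use sub_fin_dim[OF sX] in simp)
  then show ?thesis unfolding subspace_dim_def by simp
qed

lemma dim_full: "subspace_dim N (carrier_vec N :: 'a::field vec set) = N"
proof -
  interpret vec_space "TYPE('a)" N .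
  have e: "module_vec TYPE('a) N\<lparr>carrier := carrier_vec N\<rparr> = module_vec TYPE('a) N" by (simp add: module_vec_def)
  show ?thesis unfolding subspace_dim_def e using dim_is_n by simp
qed

lemma dim_inj:
  fixes V W :: "'a::field vec set" and T :: "'a vec \<Rightarrow> 'a vec"
  assumes sV: "subspace class_ring V (module_vec TYPE('a) N)"
    and sW: "subspace class_ring W (module_vec TYPE('a) M)"
    and TW: "\<And>v. v \<in> V \<Longrightarrow> T v \<in> W"
    and Tadd: "\<And>v w. v\<in>V \<Longrightarrow> w\<in>V \<Longrightarrow> T (v+w) = T v + T w"
    and Tsm: "\<And>c v. v\<in>V \<Longrightarrow> T (c \<cdot>\<^sub>v v) = c \<cdot>\<^sub>v T v"
    and inj: "inj_on T V"
  shows "subspace_dim N V \<le> subspace_dim M W"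
proof -
  interpret NN: vec_space "TYPE('a)" N .
  interpret MM: vec_space "TYPE('a)" M .
  have vV: "vectorspace class_ring (NN.vs V)" using NN.subspace_is_vs[OF sV] .
  have vW: "vectorspace class_ring (MM.vs W)" using MM.subspace_is_vs[OF sW] .
  interpret L: linear_map class_ring "NN.vs V" "MM.vs W" T
    unfolding linear_map_def mod_hom_def mod_hom_axioms_def LinearCombinations.module_hom_def
    using vV vW TW Tadd Tsm by (auto simp: vectorspace_def)
  have WM: "W \<subseteq> carrier_vec M" using sW unfolding subspace_def LinearCombinations.submodule_def by auto
  have VN: "V \<subseteq> carrier_vec N" using sV unfolding subspace_def LinearCombinations.submodule_def by auto
  have V0: "0\<^sub>v N \<in> V" using sV unfolding subspace_def LinearCombinations.submodule_def by auto
  have fdV: "L.V.fin_dim" using sub_fin_dim[OF sV] .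
  have rn: "vectorspace.dim class_ring ((MM.vs W)\<lparr>carrier := L.imT\<rparr>) + vectorspace.dim class_ring ((NN.vs V)\<lparr>carrier := L.kerT\<rparr>) = L.V.dim"
    by (rule L.rank_nullity[OF fdV])
  have k0: "vectorspace.dim class_ring ((NN.vs V)\<lparr>carrier := L.kerT\<rparr>) = 0"
    by (rule L.inj_imp_dim_ker0) (use inj in simp)
  have imeq: "L.imT = T ` V" unfolding L.im_def by simp
  have T0: "T (0\<^sub>v N) = 0\<^sub>v M"
  proof -
    have "T (0 \<cdot>\<^sub>v 0\<^sub>v N) = 0 \<cdot>\<^sub>v T (0\<^sub>v N)" using Tsm V0 by blast
    then show ?thesis using TW[OF V0] WM by auto
  qed
  have sI: "subspace class_ring (T ` V) (module_vec TYPE('a) M)"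
  proof (rule vsubI)
    show "T ` V \<subseteq> carrier_vec M" using TW WM by auto
    show "0\<^sub>v M \<in> T ` V" using T0 V0 by force
    show "v + w \<in> T ` V" if "v \<in> T ` V" "w \<in> T ` V" for v w
      using that Tadd sV unfolding subspace_def LinearCombinations.submodule_def
      by (auto simp: module_vec_simps) (metis image_eqI)
    show "c \<cdot>\<^sub>v v \<in> T ` V" if "v \<in> T ` V" for c v
      using that Tsm sV unfolding subspace_def LinearCombinations.submodule_def
      by (auto simp: module_vec_simps class_ring_simps) (metis image_eqI)
  qed
  have "subspace_dim M (T ` V) \<le> subspace_dim M W"
    by (rule dim_mono[OF sI sW]) (use TW in auto)
  moreover have "L.V.dim = subspace_dim N V" unfolding subspace_dim_def by simp
  moreover have "vectorspace.dim class_ring ((MM.vs W)\<lparr>carrier := L.imT\<rparr>) = subspace_dim M (T ` V)"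
    unfolding subspace_dim_def imeq by simp
  ultimately show ?thesis using rn k0 by linarith
qed

lemma kernel_dim_ge:
  fixes A :: "'a::field mat"
  assumes A: "A \<in> carrier_mat nr nc"
  shows "nc - nr \<le> subspace_dim nc (mat_kernel A)"
proof -
  interpret K: kernel nr nc A by (unfold_locales, rule A)
  define C where "C = gauss_jordan_single A"
  have C: "C \<in> carrier_mat nr nc" "row_echelon_form C"
    using gauss_jordan_single[OF A C_def[symmetric]] by auto
  then obtain f where f: "pivot_fun C f nc" unfolding row_echelon_form_def by auto
  have "length (pivot_positions C) = card { i. i < nr \<and> row C i \<noteq> 0\<^sub>v nc}"
    using pivot_positions(4)[OF C(1) f] .
  also have "\<dots> \<le> nr" by (rule order.trans[OF card_mono[of "{..<nr}"]]) auto
  finally have "nc - nr \<le> kernel_dim A" unfolding kernel_dim_code C_def[symmetric] using A by auto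
  also have "kernel_dim A = subspace_dim nc (mat_kernel A)"
    unfolding K.kernel_dim subspace_dim_def by simp
  finally show ?thesis .
qed

lemma ker_closed:
  fixes A :: "'a::field mat"
  assumes A: "A \<in> carrier_mat nr nc"
  shows "mat_kernel A \<subseteq> carrier_vec nc" "0\<^sub>v nc \<in> mat_kernel A"
    "\<And>v w. v \<in> mat_kernel A \<Longrightarrow> w \<in> mat_kernel A \<Longrightarrow> v + w \<in> mat_kernel A"
    "\<And>c v. v \<in> mat_kernel A \<Longrightarrow> c \<cdot>\<^sub>v v \<in> mat_kernel A"
proof -
  show "mat_kernel A \<subseteq> carrier_vec nc" by (rule mat_kernel_carrier[OF A])
  show "0\<^sub>v nc \<in> mat_kernel A" by (rule mat_kernelI[OF A]) (use A in auto)
  show "v + w \<in> mat_kernel A" if v: "v \<in> mat_kernel A" and w: "w \<in> mat_kernel A" for v w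
  proof -
    note v' = mat_kernelD[OF A v] and w' = mat_kernelD[OF A w]
    have "A *\<^sub>v (v + w) = A *\<^sub>v v + A *\<^sub>v w" by (rule mult_add_distrib_mat_vec[OF A v'(1) w'(1)])
    also have "\<dots> = 0\<^sub>v nr" using v'(2) w'(2) by simp
    finally have e: "A *\<^sub>v (v + w) = 0\<^sub>v nr" .
    have c: "v + w \<in> carrier_vec nc" using v'(1) w'(1) by simp
    show ?thesis by (rule mat_kernelI[OF A c e])
  qed
  show "c \<cdot>\<^sub>v v \<in> mat_kernel A" if v: "v \<in> mat_kernel A" for c v
  proof -
    note v' = mat_kernelD[OF A v]
    have "A *\<^sub>v (c \<cdot>\<^sub>v v) = c \<cdot>\<^sub>v (A *\<^sub>v v)" by (rule mult_mat_vec[OF A v'(1)])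
    also have "\<dots> = 0\<^sub>v nr" using v'(2) by (intro eq_vecI) auto
    finally have e: "A *\<^sub>v (c \<cdot>\<^sub>v v) = 0\<^sub>v nr" .
    have c: "c \<cdot>\<^sub>v v \<in> carrier_vec nc" using v'(1) by simp
    show ?thesis by (rule mat_kernelI[OF A c e])
  qed
qed

lemma ker_sub:
  fixes A :: "'a::field mat"
  assumes A: "A \<in> carrier_mat nr nc"
  shows "subspace class_ring (mat_kernel A) (module_vec TYPE('a) nc)"
  by (rule vsubI) (rule ker_closed[OF A]; assumption)+

lemma ker_inter_sub:
  fixes A :: "nat \<Rightarrow> 'a::field mat"
  assumes I: "i0 \<in> I" and A: "\<And>i. i \<in> I \<Longrightarrow> A i \<in> carrier_mat d d"
  shows "subspace class_ring (\<Inter>i\<in>I. mat_kernel (A i)) (module_vec TYPE('a) d)"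
proof (rule vsubI)
  note k = ker_closed[OF A]
  show "(\<Inter>i\<in>I. mat_kernel (A i)) \<subseteq> carrier_vec d"
  proof
    fix x assume "x \<in> (\<Inter>i\<in>I. mat_kernel (A i))"
    then have "x \<in> mat_kernel (A i0)" using I by (rule INT_D)
    then show "x \<in> carrier_vec d" using k(1)[OF I] by (rule subsetD[rotated])
  qed
  show "0\<^sub>v d \<in> (\<Inter>i\<in>I. mat_kernel (A i))" by (rule INT_I) (rule k(2))
  show "v + w \<in> (\<Inter>i\<in>I. mat_kernel (A i))" if v: "v \<in> (\<Inter>i\<in>I. mat_kernel (A i))" and w: "w \<in> (\<Inter>i\<in>I. mat_kernel (A i))" for v w
  proof (rule INT_I)
    fix i assume i: "i \<in> I"
    show "v + w \<in> mat_kernel (A i)" by (rule k(3)[OF i INT_D[OF v i] INT_D[OF w i]])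
  qed
  show "c \<cdot>\<^sub>v v \<in> (\<Inter>i\<in>I. mat_kernel (A i))" if v: "v \<in> (\<Inter>i\<in>I. mat_kernel (A i))" for c v
  proof (rule INT_I)
    fix i assume i: "i \<in> I"
    show "c \<cdot>\<^sub>v v \<in> mat_kernel (A i)" by (rule k(4)[OF i INT_D[OF v i]])
  qed
qed
lemma polyfun_sum:
  assumes "finite A" "\<And>a. a \<in> A \<Longrightarrow> f a \<in> polyfun"
  shows "(\<lambda>x. \<Sum>a\<in>A. f a x) \<in> polyfun"
  using assms
proof (induction A rule: finite_induct)
  case empty then show ?case by (simp add: polyfun.const)
next
  case (insert a A)
  have "(\<lambda>x. f a x + (\<Sum>a\<in>A. f a x)) \<in> polyfun"
    using insert by (intro polyfun.add) auto
  then show ?case using insert by simp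
qed

lemma polyfun_prod:
  assumes "finite A" "\<And>a. a \<in> A \<Longrightarrow> f a \<in> polyfun"
  shows "(\<lambda>x. \<Prod>a\<in>A. f a x) \<in> polyfun"
  using assms
proof (induction A rule: finite_induct)
  case empty then show ?case by (simp add: polyfun.const)
next
  case (insert a A)
  have "(\<lambda>x. f a x * (\<Prod>a\<in>A. f a x)) \<in> polyfun"
    using insert by (intro polyfun.mult) auto
  then show ?case using insert by simp
qed

lemma polyfun_det:
  fixes g :: "nat \<Rightarrow> nat \<Rightarrow> 'v"
  shows "(\<lambda>x::'v \<Rightarrow> 'a::comm_ring_1. det (mat m m (\<lambda>(a,b). x (g a b)))) \<in> polyfun"
proof -
  have eq: "(\<lambda>x::'v \<Rightarrow> 'a. det (mat m m (\<lambda>(a,b). x (g a b)))) =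
    (\<lambda>x. \<Sum>p\<in>{p. p permutes {0..<m}}. signof p * (\<Prod>i\<in>{0..<m}. x (g i (p i))))"
  proof
    fix x :: "'v \<Rightarrow> 'a"
    have "det (mat m m (\<lambda>(a,b). x (g a b))) = (\<Sum>p\<in>{p. p permutes {0..<m}}. signof p * (\<Prod>i\<in>{0..<m}. mat m m (\<lambda>(a,b). x (g a b)) $$ (i, p i)))"
      unfolding det_def by (simp only: dim_row_mat dim_col_mat refl if_True)
    also have "\<dots> = (\<Sum>p\<in>{p. p permutes {0..<m}}. signof p * (\<Prod>i\<in>{0..<m}. x (g i (p i))))"
    proof (rule sum.cong[OF refl], rule arg_cong[where f = "\<lambda>y. _ * y"], rule prod.cong[OF refl])
      fix p i assume "p \<in> {p. p permutes {0..<m}}" "i \<in> {0..<m}"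
      then have "p i < m" by (simp add: permutes_in_image)
      then show "mat m m (\<lambda>(a,b). x (g a b)) $$ (i, p i) = x (g i (p i))" using \<open>i \<in> {0..<m}\<close> by simp
    qed
    finally show "det (mat m m (\<lambda>(a,b). x (g a b))) = (\<Sum>p\<in>{p. p permutes {0..<m}}. signof p * (\<Prod>i\<in>{0..<m}. x (g i (p i))))" .
  qed
  have fin: "finite {p. p permutes {0..<m}}" by (rule finite_permutations) simp
  have "(\<lambda>x::'v \<Rightarrow> 'a. \<Sum>p\<in>{p. p permutes {0..<m}}. signof p * (\<Prod>i\<in>{0..<m}. x (g i (p i)))) \<in> polyfun"
  proof (rule polyfun_sum[OF fin])
    fix p
    show "(\<lambda>x::'v \<Rightarrow> 'a. signof p * (\<Prod>i\<in>{0..<m}. x (g i (p i)))) \<in> polyfun"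
      by (rule polyfun.mult[OF polyfun.const polyfun_prod]) (simp_all add: polyfun.var)
  qed
  then show ?thesis unfolding eq .
qed

definition iota :: "nat \<Rightarrow> nat \<Rightarrow> nat \<Rightarrow> nat" where
  "iota s n a = (if a < s then a else if a < s+n then a - s else 0)"
definition rho :: "nat \<Rightarrow> nat \<Rightarrow> nat \<Rightarrow> nat \<Rightarrow> nat" where
  "rho r s n a = (if a < s then 0 else if a < s+n then (if a - s < r then a - s + 1 else 0) else r+1)"
definition kap :: "nat \<Rightarrow> nat \<Rightarrow> nat \<Rightarrow> nat \<Rightarrow> nat" where
  "kap r s n b = (if b < s then b+1 else if b < s+n then r+1+(b-s) else r+n+1)"
definition kap2 :: "nat \<Rightarrow> nat \<Rightarrow> nat" where
  "kap2 s t = (if t = 0 then 0 else s+t)"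
definition minorM :: "nat \<Rightarrow> nat \<Rightarrow> nat \<Rightarrow> (nat \<times> nat \<times> nat \<Rightarrow> 'a) \<Rightarrow> 'a mat" where
  "minorM n r s x = mat (n+s+1) (n+s+1) (\<lambda>(a,b). x (iota s n a, rho r s n a, kap r s n b))"

lemma polyfun_minor: "(\<lambda>x. det (minorM n r s x)) \<in> polyfun"
  unfolding minorM_def by (rule polyfun_det)

context
  fixes n r s :: nat
  assumes rs: "1 \<le> s" "s \<le> r" "r \<le> n"
begin

lemma iota_lt: "a < n+s+1 \<Longrightarrow> iota s n a < n" using rs unfolding iota_def by auto
lemma rho_lt: "a < n+s+1 \<Longrightarrow> rho r s n a < n+r+2" using rs unfolding rho_def by auto
lemma kap_lt: "b < n+s+1 \<Longrightarrow> kap r s n b < n+r+2" using rs unfolding kap_def by auto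
lemma kap2_lt: "t < r+1-s \<Longrightarrow> kap2 s t < n+r+2" using rs unfolding kap2_def by auto
lemma kap_inj: "inj_on (kap r s n) {..<n+s+1}"
  unfolding inj_on_def kap_def using rs by (auto split: if_splits)
lemma cover: "j < n+r+2 \<Longrightarrow> (\<exists>b<n+s+1. kap r s n b = j) \<or> (\<exists>t<r+1-s. kap2 s t = j)"
proof -
  assume j: "j < n+r+2"
  consider "j = 0" | "1 \<le> j \<and> j \<le> s" | "s < j \<and> j \<le> r" | "r < j \<and> j \<le> r+n" | "j = r+n+1"
    using j by linarith
  then show ?thesis
  proof cases
    case 1 then show ?thesis by (intro disjI2 exI[of _ 0]) (use rs in \<open>auto simp: kap2_def\<close>)
  next
    case 2 then show ?thesis by (intro disjI1 exI[of _ "j - 1"]) (use rs in \<open>auto simp: kap_def\<close>)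
  next
    case 3 then show ?thesis by (intro disjI2 exI[of _ "j - s"]) (use rs in \<open>auto simp: kap2_def\<close>)
  next
    case 4 then show ?thesis by (intro disjI1 exI[of _ "s + j - r - 1"]) (use rs in \<open>auto simp: kap_def\<close>)
  next
    case 5 then show ?thesis by (intro disjI1 exI[of _ "s + n"]) (use rs in \<open>auto simp: kap_def\<close>)
  qed
qed

lemma minor_coords:
  "minorM n r s (tuple_coords n (n+r+2) As) =
   mat (n+s+1) (n+s+1) (\<lambda>(a,b). As ! (iota s n a) $$ (rho r s n a, kap r s n b))"
  unfolding minorM_def tuple_coords_def
  by (rule eq_matI) (auto simp: iota_lt[simplified] rho_lt[simplified] kap_lt[simplified])

lemma zero_crit:
  fixes As :: "'a::field mat list"
  assumes car: "\<forall>i<n. As!i \<in> carrier_mat (n+r+2) (n+r+2)"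
    and dt: "det (minorM n r s (tuple_coords n (n+r+2) As)) \<noteq> 0"
    and z: "z \<in> carrier_vec (n+r+2)" "\<forall>i<n. As!i *\<^sub>v z = 0\<^sub>v (n+r+2)"
    and z2: "\<forall>t<r+1-s. z $ kap2 s t = 0"
  shows "z = 0\<^sub>v (n+r+2)"
proof -
  define m where "m = n+s+1"
  define d where "d = n+r+2"
  define Mn where "Mn = minorM n r s (tuple_coords n d As)"
  have Mn: "Mn = mat m m (\<lambda>(a,b). As ! (iota s n a) $$ (rho r s n a, kap r s n b))"
    unfolding Mn_def d_def m_def by (rule minor_coords)
  have Mc: "Mn \<in> carrier_mat m m" unfolding Mn by simp
  define wv where "wv = vec m (\<lambda>b. z $ kap r s n b)"
  have wv: "wv \<in> carrier_vec m" unfolding wv_def by simp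
  have zero_out: "z $ j = 0" if "j < d" "j \<notin> kap r s n ` {..<m}" for j
    using cover[of j] that z2 unfolding d_def m_def by auto
  have "Mn *\<^sub>v wv = 0\<^sub>v m"
  proof (rule eq_vecI)
    fix a assume "a < dim_vec (0\<^sub>v m :: 'a vec)"
    then have a: "a < m" by simp
    let ?A = "As ! (iota s n a)"
    let ?i = "rho r s n a"
    have Ac: "?A \<in> carrier_mat d d" using car iota_lt[of a] a unfolding d_def m_def by auto
    have ia: "?i < d" using rho_lt[of a] a unfolding d_def m_def by auto
    have "0 = (?A *\<^sub>v z) $ ?i" using z(2) iota_lt[of a] a ia unfolding d_def m_def by auto
    also have "\<dots> = (\<Sum>j\<in>{0..<d}. ?A $$ (?i, j) * z $ j)"
      using Ac ia z(1) unfolding d_def by (simp add: scalar_prod_def)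
    also have "\<dots> = (\<Sum>j\<in>kap r s n ` {..<m}. ?A $$ (?i, j) * z $ j)"
      by (rule sum.mono_neutral_right) (use kap_lt zero_out in \<open>auto simp: d_def m_def\<close>)
    also have "\<dots> = (\<Sum>b\<in>{..<m}. ?A $$ (?i, kap r s n b) * z $ kap r s n b)"
      by (subst sum.reindex) (use kap_inj in \<open>auto simp: m_def\<close>)
    also have "\<dots> = (Mn *\<^sub>v wv) $ a"
      using a Mc wv by (auto simp: Mn wv_def scalar_prod_def lessThan_atLeast0 intro!: sum.cong)
    finally show "(Mn *\<^sub>v wv) $ a = 0\<^sub>v m $ a" using a by simp
  qed (use Mc in simp)
  then have "wv = 0\<^sub>v m"
    using det_0_iff_vec_prod_zero_field[OF Mc] dt wv unfolding Mn_def d_def by auto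
  then have kz: "z $ kap r s n b = 0" if "b < m" for b
    using that unfolding wv_def by (metis index_vec index_zero_vec(1))
  show ?thesis
  proof (rule eq_vecI)
    fix j assume "j < dim_vec (0\<^sub>v (n+r+2) :: 'a vec)"
    then have j: "j < d" unfolding d_def by simp
    show "z $ j = 0\<^sub>v (n+r+2) $ j"
      using zero_out[OF j] kz j unfolding d_def by auto
  qed (use z in simp)
qed

lemma upper:
  fixes As :: "'a::field mat list"
  assumes car: "\<forall>i<n. As!i \<in> carrier_mat (n+r+2) (n+r+2)"
    and dt: "det (minorM n r s (tuple_coords n (n+r+2) As)) \<noteq> 0"
  shows "subspace_dim (n+r+2) (\<Inter>i\<in>{..<n}. mat_kernel (As!i)) \<le> r+1-s"
proof -
  define d where "d = n+r+2"
  define e where "e = r+1-s"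
  define W where "W = (\<Inter>i\<in>{..<n}. mat_kernel (As!i))"
  define T where "T = (\<lambda>v::'a vec. vec e (\<lambda>t. v $ kap2 s t))"
  have sW: "subspace class_ring W (module_vec TYPE('a) d)"
    unfolding W_def d_def by (rule ker_inter_sub[of 0]) (use rs car in auto)
  have Wc: "W \<subseteq> carrier_vec d" using sW unfolding subspace_def LinearCombinations.submodule_def
    by (auto simp: module_vec_simps)
  have Wk: "As!i *\<^sub>v v = 0\<^sub>v d" "v \<in> carrier_vec d" if "v \<in> W" "i < n" for v i
    using that mat_kernelD[of "As!i" d d v] car unfolding W_def d_def by auto
  have sF: "subspace class_ring (carrier_vec e) (module_vec TYPE('a) e)"
    by (rule vsubI) auto
  have "subspace_dim d W \<le> subspace_dim e (carrier_vec e :: 'a vec set)"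
  proof (rule dim_inj[OF sW sF])
    show "T v \<in> carrier_vec e" for v unfolding T_def by simp
    show "T (v + w) = T v + T w" if "v \<in> W" "w \<in> W" for v w
      using that Wc kap2_lt unfolding T_def e_def d_def by (intro eq_vecI) auto
    show "T (c \<cdot>\<^sub>v v) = c \<cdot>\<^sub>v T v" if "v \<in> W" for c v
      using that Wc kap2_lt unfolding T_def e_def d_def by (intro eq_vecI) auto
    show "inj_on T W"
    proof (rule inj_onI)
      fix v w assume v: "v \<in> W" and w: "w \<in> W" and eq: "T v = T w"
      define z where "z = v - w"
      have vc: "v \<in> carrier_vec d" and wc: "w \<in> carrier_vec d" using v w Wc by auto
      have zc: "z \<in> carrier_vec d" unfolding z_def using vc wc by simp
      have zk: "\<forall>i<n. As!i *\<^sub>v z = 0\<^sub>v d"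
      proof (intro allI impI)
        fix i assume i: "i < n"
        have "As!i *\<^sub>v z = As!i *\<^sub>v v - As!i *\<^sub>v w"
          unfolding z_def using car i vc wc unfolding d_def by (intro mult_minus_distrib_mat_vec) auto
        then show "As!i *\<^sub>v z = 0\<^sub>v d" using Wk[OF v i] Wk[OF w i] by auto
      qed
      have z2: "\<forall>t<r+1-s. z $ kap2 s t = 0"
      proof (intro allI impI)
        fix t assume t: "t < r+1-s"
        have "T v $ t = T w $ t" using eq by simp
        then have "v $ kap2 s t = w $ kap2 s t" using t unfolding T_def e_def by simp
        then show "z $ kap2 s t = 0" unfolding z_def using vc wc kap2_lt[OF t] unfolding d_def by simp
      qed
      have "z = 0\<^sub>v d" unfolding d_def
        by (rule zero_crit[OF car dt]) (use zc zk z2 in \<open>auto simp: d_def\<close>)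
      then show "v = w" unfolding z_def using vc wc
        by (metis (no_types, lifting) carrier_vecD eq_vecI index_minus_vec(1) index_zero_vec(1) right_minus_eq)
    qed
  qed
  then show ?thesis using dim_full[where N=e and 'a='a] unfolding W_def d_def e_def by simp
qed

end

lemma pad_block_zero:
  fixes B :: "'a::field mat"
  assumes bs: "block_shape n r B" and u: "u \<in> carrier_vec (r+1)"
    and orth: "vec r (\<lambda>k. u $ (k+1)) \<bullet> blk_b n r B = 0"
  shows "B *\<^sub>v vec (n+r+2) (\<lambda>j. if j \<le> r then u $ j else 0) = 0\<^sub>v (n+r+2)"
proof -
  define d where "d = n+r+2"
  define pu where "pu = vec d (\<lambda>j. if j \<le> r then u $ j else 0)"
  have Bc: "B \<in> carrier_mat d d" using bs unfolding block_shape_def d_def by auto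
  have nz: "\<And>j k. j < d \<Longrightarrow> k < d \<Longrightarrow> B $$ (j,k) \<noteq> 0 \<Longrightarrow>
        (j = 0 \<and> 1 \<le> k \<and> k \<le> r + n) \<or>
        (1 \<le> j \<and> j \<le> r \<and> r + 1 \<le> k \<and> k \<le> r + n) \<or>
        (r + 1 \<le> j \<and> j \<le> r + n \<and> k = r + n + 1)"
    using bs unfolding block_shape_def d_def by blast
  have "B *\<^sub>v pu = 0\<^sub>v d"
  proof (rule eq_vecI)
    fix j assume "j < dim_vec (0\<^sub>v d :: 'a vec)"
    then have j: "j < d" by simp
    have e: "(B *\<^sub>v pu) $ j = (\<Sum>k\<in>{0..<d}. B $$ (j,k) * pu $ k)"
      using Bc j unfolding pu_def by (simp add: scalar_prod_def)
    show "(B *\<^sub>v pu) $ j = 0\<^sub>v d $ j"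
    proof (cases "j = 0")
      case True
      have "(\<Sum>k\<in>{0..<d}. B $$ (j,k) * pu $ k) = (\<Sum>k\<in>{0..<Suc r}. B $$ (j,k) * pu $ k)"
        by (rule sum.mono_neutral_right) (auto simp: d_def pu_def)
      also have "\<dots> = B $$ (j,0) * pu $ 0 + (\<Sum>k\<in>{0..<r}. B $$ (j, Suc k) * pu $ Suc k)"
        by (subst sum.atLeast0_lessThan_Suc_shift) simp
      also have "B $$ (j,0) = 0" using nz[of j 0] j True by (auto simp: d_def)
      also have "(\<Sum>k\<in>{0..<r}. B $$ (j, Suc k) * pu $ Suc k) = vec r (\<lambda>k. u $ (k+1)) \<bullet> blk_b n r B"
        unfolding scalar_prod_def blk_b_def pu_def d_def using True
        by (auto intro!: sum.cong simp: mult.commute)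
      finally show ?thesis using e orth j by simp
    next
      case False
      have "(\<Sum>k\<in>{0..<d}. B $$ (j,k) * pu $ k) = 0"
      proof (rule sum.neutral, intro ballI)
        fix k assume k: "k \<in> {0..<d}"
        show "B $$ (j,k) * pu $ k = 0"
        proof (cases "k \<le> r")
          case True
          then have "B $$ (j,k) = 0" using nz[of j k] j k False by force
          then show ?thesis by simp
        next
          case False
          then show ?thesis using k unfolding pu_def by simp
        qed
      qed
      then show ?thesis using e j by simp
    qed
  qed (use Bc in auto)
  then show ?thesis unfolding pu_def d_def .
qed

context
  fixes n r s :: nat
  assumes rs: "1 \<le> s" "s \<le> r" "r \<le> n"
begin

lemma lower:
  fixes As :: "'a::field mat list"
  assumes X: "As \<in> X_nrs n r s"
  shows "r+1-s \<le> subspace_dim (n+r+2) (\<Inter>i\<in>{..<n}. mat_kernel (As!i))"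
proof -
  define d where "d = n+r+2"
  from X have "\<exists>P Pinv. P \<in> carrier_mat d d \<and> Pinv \<in> carrier_mat d d \<and>
        P * Pinv = 1\<^sub>m d \<and> Pinv * P = 1\<^sub>m d \<and>
          (\<forall>i<n. block_shape n r (map (\<lambda>A. Pinv * A * P) As ! i)) \<and>
          subspace_dim r (vspan r (set (map (blk_b n r) (map (\<lambda>A. Pinv * A * P) As)))) = s"
    unfolding X_nrs_def Let_def d_def by blast
  then obtain P Pinv where PP: "P \<in> carrier_mat d d" "Pinv \<in> carrier_mat d d" "P * Pinv = 1\<^sub>m d" "Pinv * P = 1\<^sub>m d"
    and bs: "\<forall>i<n. block_shape n r (map (\<lambda>A. Pinv * A * P) As ! i)"
    and sd: "subspace_dim r (vspan r (set (map (blk_b n r) (map (\<lambda>A. Pinv * A * P) As)))) = s"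
    by blast
  have len: "length As = n" and car: "\<forall>i<n. As!i \<in> carrier_mat d d"
    using X unfolding X_nrs_def d_def by auto
  define Bs where "Bs = map (\<lambda>A. Pinv * A * P) As"
  define bset where "bset = set (map (blk_b n r) Bs)"
  interpret R: vec_space "TYPE('a)" r .
  have bset_c: "bset \<subseteq> carrier_vec r" unfolding bset_def blk_b_def by auto
  have fin: "finite bset" unfolding bset_def by simp
  have sub_span: "subspace class_ring (R.span bset) R.V" by (rule R.span_is_subspace[OF bset_c])
  interpret SP: vectorspace class_ring "R.vs (R.span bset)" by (rule R.subspace_is_vs[OF sub_span])
  have fd: "SP.fin_dim" using R.fin_dim_span[OF fin] bset_c by simp
  obtain \<beta> where \<beta>f: "finite \<beta>" and \<beta>b: "SP.basis \<beta>" using SP.finite_basis_exists[OF fd] by blast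
  have card\<beta>: "card \<beta> = s" using SP.dim_basis[OF \<beta>f \<beta>b] sd
    unfolding subspace_dim_def vspan_def Bs_def bset_def by simp
  have \<beta>sub: "\<beta> \<subseteq> R.span bset" using \<beta>b unfolding SP.basis_def by simp
  have \<beta>c: "\<beta> \<subseteq> carrier_vec r" using \<beta>sub R.span_closed[OF bset_c] by auto
  have subm: "LinearCombinations.submodule class_ring (R.span bset) R.V"
    using sub_span unfolding subspace_def by auto
  have span\<beta>: "R.span \<beta> = R.span bset"
    using \<beta>b R.span_li_not_depend(1)[OF \<beta>sub subm] unfolding SP.basis_def by simp
  obtain bl where bl: "set bl = \<beta>" "distinct bl" using finite_distinct_list[OF \<beta>f] by blast
  have lbl: "length bl = s" using distinct_card[OF bl(2)] bl(1) card\<beta> by simp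
  define M' where "M' = mat s (r+1) (\<lambda>(k,j). if j = 0 then 0 else (bl!k) $ (j-1))"
  have M'c: "M' \<in> carrier_mat s (r+1)" unfolding M'_def by simp
  define V1 where "V1 = mat_kernel M'"
  have dV1: "r+1-s \<le> subspace_dim (r+1) V1" unfolding V1_def using kernel_dim_ge[OF M'c] by simp
  define pad where "pad = (\<lambda>u::'a vec. vec d (\<lambda>j. if j \<le> r then u $ j else 0))"
  define T where "T = (\<lambda>u. P *\<^sub>v pad u)"
  define W where "W = (\<Inter>i\<in>{..<n}. mat_kernel (As!i))"
  have sW: "subspace class_ring W (module_vec TYPE('a) d)"
    unfolding W_def by (rule ker_inter_sub[of 0]) (use rs car in auto)
  have sV1: "subspace class_ring V1 (module_vec TYPE('a) (r+1))"
    unfolding V1_def by (rule ker_sub[OF M'c])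
  have V1k: "u \<in> carrier_vec (r+1)" "M' *\<^sub>v u = 0\<^sub>v s" if "u \<in> V1" for u
    using mat_kernelD[OF M'c] that unfolding V1_def by auto
  have orth: "vec r (\<lambda>k. u $ (k+1)) \<bullet> b = 0" if u: "u \<in> V1" and b: "b \<in> bset" for u b
  proof -
    define u' where "u' = vec r (\<lambda>k. u $ (k+1))"
    have u'c: "u' \<in> carrier_vec r" unfolding u'_def by simp
    have k0: "u' \<bullet> (bl!k) = 0" if k: "k < s" for k
    proof -
      have blc: "bl!k \<in> carrier_vec r" using \<beta>c bl(1) k lbl by auto
      have "0 = (M' *\<^sub>v u) $ k" using V1k[OF u] k by simp
      also have "\<dots> = (\<Sum>j\<in>{0..<Suc r}. M' $$ (k,j) * u $ j)"
        using M'c k V1k(1)[OF u] by (simp add: scalar_prod_def)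
      also have "\<dots> = M' $$ (k,0) * u $ 0 + (\<Sum>j\<in>{0..<r}. M' $$ (k, Suc j) * u $ Suc j)"
        by (subst sum.atLeast0_lessThan_Suc_shift) simp
      also have "\<dots> = (\<Sum>j\<in>{0..<r}. (bl!k) $ j * u $ Suc j)"
        unfolding M'_def using k by (auto intro!: sum.cong)
      also have "\<dots> = u' \<bullet> (bl!k)"
        unfolding scalar_prod_def u'_def using blc by (auto intro!: sum.cong simp: mult.commute)
      finally show ?thesis by simp
    qed
    have "u' \<in> R.orthogonal_complement \<beta>"
      unfolding R.orthogonal_complement_def using u'c k0 bl lbl by (auto simp: in_set_conv_nth)
    then have "u' \<in> R.orthogonal_complement (R.span bset)"
      using R.in_orthogonal_complement_span[OF \<beta>c] span\<beta> by simp
    moreover have "b \<in> R.span bset" using R.in_own_span[OF bset_c] b by auto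
    ultimately show ?thesis unfolding R.orthogonal_complement_def u'_def by auto
  qed
  have Bsc: "Bs!i \<in> carrier_mat d d" if "i < n" for i
    using car that PP len unfolding Bs_def by auto
  have key: "Bs!i *\<^sub>v pad u = 0\<^sub>v d" if u: "u \<in> V1" and i: "i < n" for u i
  proof -
    have bsi: "block_shape n r (Bs!i)" using bs i unfolding Bs_def by simp
    have "blk_b n r (Bs!i) \<in> bset" unfolding bset_def using i len unfolding Bs_def by auto
    then have o: "vec r (\<lambda>k. u $ (k+1)) \<bullet> blk_b n r (Bs!i) = 0" by (rule orth[OF u])
    show ?thesis using pad_block_zero[OF bsi V1k(1)[OF u] o] unfolding pad_def d_def .
  qed
  have AP: "As!i * P = P * Bs!i" if i: "i < n" for i
  proof -
    have A: "As!i \<in> carrier_mat d d" using car i by auto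
    have "P * Bs!i = P * (Pinv * As!i * P)" unfolding Bs_def using i len by simp
    also have "\<dots> = P * (Pinv * (As!i * P))" using assoc_mult_mat[OF PP(2) A PP(1)] by simp
    also have "\<dots> = (P * Pinv) * (As!i * P)"
      using assoc_mult_mat[OF PP(1) PP(2), of "As!i * P" d] A PP by simp
    also have "\<dots> = As!i * P" using PP A by simp
    finally show ?thesis by simp
  qed
  have padc: "pad u \<in> carrier_vec d" for u unfolding pad_def by simp
  have TW: "T u \<in> W" if u: "u \<in> V1" for u
  proof -
    have Tc: "T u \<in> carrier_vec d" unfolding T_def using PP padc by simp
    { fix i assume i: "i < n"
      have A: "As!i \<in> carrier_mat d d" using car i by auto
      have "As!i *\<^sub>v T u = (As!i * P) *\<^sub>v pad u" unfolding T_def using A PP padc by simp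
      also have "\<dots> = (P * Bs!i) *\<^sub>v pad u" using AP[OF i] by simp
      also have "\<dots> = P *\<^sub>v (Bs!i *\<^sub>v pad u)" using PP Bsc[OF i] padc by simp
      also have "\<dots> = 0\<^sub>v d" using key[OF u i] PP by (auto intro!: eq_vecI simp: scalar_prod_def)
      finally have "T u \<in> mat_kernel (As!i)" using mat_kernelI[OF A Tc] by simp }
    then show ?thesis unfolding W_def by auto
  qed
  have "subspace_dim (r+1) V1 \<le> subspace_dim d W"
  proof (rule dim_inj[OF sV1 sW])
    show "T v \<in> W" if "v \<in> V1" for v using TW that .
    show "T (v + w) = T v + T w" if "v \<in> V1" "w \<in> V1" for v w
    proof -
      have vw: "v \<in> carrier_vec (r+1)" "w \<in> carrier_vec (r+1)" using V1k that by auto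
      have "pad (v + w) = pad v + pad w" unfolding pad_def using vw by (intro eq_vecI) auto
      then show ?thesis unfolding T_def using PP padc by (simp add: mult_add_distrib_mat_vec[OF PP(1)])
    qed
    show "T (c \<cdot>\<^sub>v v) = c \<cdot>\<^sub>v T v" if "v \<in> V1" for c v
    proof -
      have vw: "v \<in> carrier_vec (r+1)" using V1k that by auto
      have "pad (c \<cdot>\<^sub>v v) = c \<cdot>\<^sub>v pad v" unfolding pad_def using vw by (intro eq_vecI) auto
      then show ?thesis unfolding T_def using PP padc by (simp add: mult_mat_vec[OF PP(1)])
    qed
    show "inj_on T V1"
    proof (rule inj_onI)
      fix v w assume v: "v \<in> V1" and w: "w \<in> V1" and eq: "T v = T w"
      have vw: "v \<in> carrier_vec (r+1)" "w \<in> carrier_vec (r+1)" using V1k v w by auto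
      have inv: "Pinv *\<^sub>v T x = pad x" for x
      proof -
        have "Pinv *\<^sub>v T x = (Pinv * P) *\<^sub>v pad x" unfolding T_def
          by (rule assoc_mult_mat_vec[OF PP(2) PP(1) padc, symmetric])
        also have "\<dots> = pad x" unfolding PP(4) using padc[of x] by simp
        finally show ?thesis .
      qed
      have "pad v = pad w" using inv[of v] inv[of w] eq by simp
      then have "pad v $ j = pad w $ j" if "j \<le> r" for j by simp
      then have "v $ j = w $ j" if "j < r+1" for j using that unfolding pad_def d_def by simp
      then show "v = w" using vw by (intro eq_vecI) auto
    qed
  qed
  then show ?thesis using dV1 unfolding W_def d_def by simp
qed

end

definition exE :: "nat \<Rightarrow> nat \<Rightarrow> nat \<Rightarrow> nat \<Rightarrow> nat \<Rightarrow> nat \<Rightarrow> bool" where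
  "exE n r s l j k \<longleftrightarrow> (j = 0 \<and> k = l+1 \<and> l < s) \<or> (j = 0 \<and> k = r+1+l \<and> r \<le> l) \<or>
     (j = l+1 \<and> k = r+1+l \<and> l < r) \<or> (j = r+1+l \<and> k = r+n+1)"

definition exA :: "nat \<Rightarrow> nat \<Rightarrow> nat \<Rightarrow> nat \<Rightarrow> 'a::field mat" where
  "exA n r s l = mat (n+r+2) (n+r+2) (\<lambda>(j,k). if exE n r s l j k then 1 else 0)"

definition exL :: "nat \<Rightarrow> nat \<Rightarrow> nat \<Rightarrow> 'a::field mat list" where
  "exL n r s = map (exA n r s) [0..<n]"

context
  fixes n r s :: nat
  assumes rs: "1 \<le> s" "s \<le> r" "r \<le> n"
begin

lemma exE_prod: "exE n r s l p t \<Longrightarrow> exE n r s l' t q \<Longrightarrow> l < n \<Longrightarrow> l' < n \<Longrightarrow> l = l'"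
  unfolding exE_def using rs by auto

lemma exA_car: "exA n r s l \<in> carrier_mat (n+r+2) (n+r+2)" unfolding exA_def by simp

lemma exA_zero: "l < n \<Longrightarrow> l' < n \<Longrightarrow> l \<noteq> l' \<Longrightarrow> (exA n r s l :: 'a::field mat) * exA n r s l' = 0\<^sub>m (n+r+2) (n+r+2)"
proof (rule eq_matI)
  fix p q assume l: "l < n" "l' < n" "l \<noteq> l'" and pq: "p < dim_row (0\<^sub>m (n+r+2) (n+r+2) :: 'a mat)" "q < dim_col (0\<^sub>m (n+r+2) (n+r+2) :: 'a mat)"
  have "((exA n r s l :: 'a mat) * exA n r s l') $$ (p,q) = (\<Sum>t\<in>{0..<n+r+2}. exA n r s l $$ (p,t) * exA n r s l' $$ (t,q))"
    using pq by (simp add: exA_def scalar_prod_def)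
  also have "\<dots> = 0"
  proof (rule sum.neutral, intro ballI)
    fix t assume t: "t \<in> {0..<n+r+2}"
    have "\<not> (exE n r s l p t \<and> exE n r s l' t q)" using exE_prod l by blast
    then show "(exA n r s l :: 'a mat) $$ (p,t) * exA n r s l' $$ (t,q) = 0"
      using t pq unfolding exA_def by auto
  qed
  finally show "((exA n r s l :: 'a mat) * exA n r s l') $$ (p,q) = 0\<^sub>m (n+r+2) (n+r+2) $$ (p,q)"
    using pq by simp
qed (auto simp: exA_def)

lemma exL_comm: "commuting_tuple (exL n r s :: 'a::field mat list)"
  unfolding commuting_tuple_def
proof (intro allI impI)
  fix i j assume "i < length (exL n r s :: 'a mat list)" "j < length (exL n r s :: 'a mat list)"
  then have ij: "i < n" "j < n" unfolding exL_def by auto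
  show "(exL n r s :: 'a mat list) ! i * exL n r s ! j = exL n r s ! j * exL n r s ! i"
  proof (cases "i = j")
    case False
    have h1: "(exA n r s i :: 'a mat) * exA n r s j = 0\<^sub>m (n+r+2) (n+r+2)" by (rule exA_zero[OF ij False])
    have h2: "(exA n r s j :: 'a mat) * exA n r s i = 0\<^sub>m (n+r+2) (n+r+2)" using exA_zero[OF ij(2,1)] False by auto
    have e: "(exL n r s :: 'a mat list) ! i = exA n r s i" "(exL n r s :: 'a mat list) ! j = exA n r s j"
      unfolding exL_def using ij by auto
    show ?thesis unfolding e h1 h2 ..
  qed simp
qed

lemma exA_block: "l < n \<Longrightarrow> block_shape n r (exA n r s l)"
  unfolding block_shape_def exA_def exE_def using rs by auto

lemma exA_f: "l < n \<Longrightarrow> blk_f n r (exA n r s l :: 'a::field mat) = unit_vec n l"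
  unfolding blk_f_def exA_def exE_def unit_vec_def using rs by (intro eq_vecI) auto

lemma exA_b: "l < n \<Longrightarrow> blk_b n r (exA n r s l :: 'a::field mat) = (if l < s then unit_vec r l else 0\<^sub>v r)"
  unfolding blk_b_def exA_def exE_def unit_vec_def using rs by (intro eq_vecI) auto

lemma exA_D: "l < n \<Longrightarrow> blk_D n r (exA n r s l :: 'a::field mat) = mat r n (\<lambda>(j,k). if j = l \<and> k = l \<and> l < r then 1 else 0)"
  unfolding blk_D_def exA_def exE_def using rs by (intro eq_matI) auto

lemma exL_f: "lin_indep_family n (map (blk_f n r) (exL n r s :: 'a::field mat list))"
proof -
  interpret NV: vec_space "TYPE('a)" n .
  have "map (blk_f n r) (exL n r s :: 'a mat list) = unit_vecs n"
    unfolding exL_def unit_vecs_def by (auto simp: exA_f)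
  moreover have "\<not> NV.lin_dep (set (unit_vecs n))" using NV.unit_vecs_basis unfolding NV.basis_def by auto
  ultimately show ?thesis unfolding lin_indep_family_def using unit_vecs_carrier NV.unit_vecs_distinct by auto
qed

lemma exL_D: "(\<Inter>i\<in>{..<n}. mat_kernel (transpose_mat (blk_D n r ((exL n r s :: 'a::field mat list) ! i)))) = {0\<^sub>v r}"
proof
  have c: "transpose_mat (blk_D n r ((exL n r s :: 'a mat list) ! i)) \<in> carrier_mat n r" for i
    unfolding blk_D_def by simp
  show "{0\<^sub>v r} \<subseteq> (\<Inter>i\<in>{..<n}. mat_kernel (transpose_mat (blk_D n r ((exL n r s :: 'a mat list) ! i))))"
    using ker_closed(2)[OF c] by auto
  show "(\<Inter>i\<in>{..<n}. mat_kernel (transpose_mat (blk_D n r ((exL n r s :: 'a mat list) ! i)))) \<subseteq> {0\<^sub>v r}"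
  proof
    fix u assume u: "u \<in> (\<Inter>i\<in>{..<n}. mat_kernel (transpose_mat (blk_D n r ((exL n r s :: 'a mat list) ! i))))"
    have "u \<in> mat_kernel (transpose_mat (blk_D n r ((exL n r s :: 'a mat list) ! 0)))" using u rs by auto
    then have uc: "u \<in> carrier_vec r" using mat_kernelD(1)[OF c] by auto
    have "u $ l = 0" if l: "l < r" for l
    proof -
      have ln: "l < n" using l rs by simp
      let ?D = "blk_D n r ((exL n r s :: 'a mat list) ! l)"
      have D: "?D = mat r n (\<lambda>(j,k). if j = l \<and> k = l \<and> l < r then 1 else 0)"
        using exA_D[OF ln] ln unfolding exL_def by simp
      have "transpose_mat ?D *\<^sub>v u = 0\<^sub>v n" using u mat_kernelD(2)[OF c] ln by auto
      then have "(transpose_mat ?D *\<^sub>v u) $ l = 0" using ln by simp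
      moreover have "(transpose_mat ?D *\<^sub>v u) $ l = (\<Sum>j\<in>{0..<r}. (if j = l then 1 else 0) * u $ j)"
        using ln l uc unfolding D by (auto simp: scalar_prod_def intro!: sum.cong)
      moreover have "(\<Sum>j\<in>{0..<r}. (if j = l then 1 else 0) * u $ j) = (\<Sum>j\<in>{0..<r}. (if j = l then u $ j else 0))"
        by (rule sum.cong) auto
      moreover have "(\<Sum>j\<in>{0..<r}. (if j = l then u $ j else 0)) = u $ l" using l by (simp add: sum.delta)
      ultimately show ?thesis by simp
    qed
    then show "u \<in> {0\<^sub>v r}" using uc by (auto intro!: eq_vecI)
  qed
qed

lemma exL_b: "subspace_dim r (vspan r (set (map (blk_b n r) (exL n r s :: 'a::field mat list)))) = s"
proof -
  interpret R: vec_space "TYPE('a)" r .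
  define S where "S = set (map (blk_b n r) (exL n r s :: 'a mat list))"
  have S: "S = (\<lambda>l. if l < s then unit_vec r l else 0\<^sub>v r) ` {..<n}"
    unfolding S_def exL_def by (auto simp: exA_b)
  define U where "U = (unit_vec r ` {..<s} :: 'a vec set)"
  have Sc: "S \<subseteq> carrier_vec r" unfolding S by auto
  have finS: "finite S" unfolding S by simp
  have US: "U \<subseteq> S" unfolding U_def S using rs by force
  have SU: "S \<subseteq> insert (0\<^sub>v r) U" unfolding U_def S by auto
  have Uli: "R.lin_indpt U"
  proof (rule R.subset_li_is_li)
    show "R.lin_indpt (set (unit_vecs r))" using R.unit_vecs_basis unfolding R.basis_def by auto
    show "U \<subseteq> set (unit_vecs r)" unfolding U_def unit_vecs_def using rs by auto
  qed
  have max: "maximal U (\<lambda>T. T \<subseteq> S \<and> R.lin_indpt T)"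
    unfolding maximal_def
  proof (intro conjI allI impI)
    show "U \<subseteq> S" by (rule US)
    show "R.lin_indpt U" by (rule Uli)
    fix B assume B: "U \<subseteq> B \<and> B \<subseteq> S \<and> R.lin_indpt B"
    have "0\<^sub>v r \<notin> B" using R.vs_zero_lin_dep[of B] B Sc by auto
    then show "B = U" using B SU by auto
  qed
  have cU: "card U = s" unfolding U_def using rs
    by (subst card_image) (auto simp: inj_on_def)
  have "vectorspace.dim class_ring (R.vs (R.span S)) = card U"
    by (rule R.dim_span[OF _ finS max]) (use Sc in simp)
  then show ?thesis unfolding subspace_dim_def vspan_def S_def cU by simp
qed

lemma exL_X: "(exL n r s :: 'a::field mat list) \<in> X_nrs n r s"
proof -
  define d where "d = n+r+2"
  have len: "length (exL n r s :: 'a mat list) = n" unfolding exL_def by simp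
  have nth: "(exL n r s :: 'a mat list) ! i = exA n r s i" if "i < n" for i
    unfolding exL_def using that by simp
  have car: "\<forall>i<n. (exL n r s :: 'a mat list) ! i \<in> carrier_mat d d" using nth exA_car unfolding d_def by auto
  have mp: "map (\<lambda>A. 1\<^sub>m d * A * 1\<^sub>m d) (exL n r s :: 'a mat list) = exL n r s"
  proof (rule map_idI)
    fix A assume "A \<in> set (exL n r s :: 'a mat list)"
    then have "A \<in> carrier_mat d d" unfolding exL_def d_def using exA_car by auto
    then show "1\<^sub>m d * A * 1\<^sub>m d = A" by simp
  qed
  show ?thesis unfolding X_nrs_def Let_def
  proof (intro CollectI conjI exI[of _ "1\<^sub>m d"])
    show "length (exL n r s :: 'a mat list) = n" by (rule len)
    show "\<forall>i<n. (exL n r s :: 'a mat list) ! i \<in> carrier_mat (n+r+2) (n+r+2)" using car unfolding d_def .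
    show "commuting_tuple (exL n r s :: 'a mat list)" by (rule exL_comm)
    show "1\<^sub>m d \<in> carrier_mat (n+r+2) (n+r+2)" unfolding d_def by simp
    show "1\<^sub>m d * 1\<^sub>m d = (1\<^sub>m (n+r+2) :: 'a mat)" unfolding d_def by simp
    show "\<forall>i<n. block_shape n r (map (\<lambda>A. 1\<^sub>m d * A * 1\<^sub>m d) (exL n r s :: 'a mat list) ! i)"
      unfolding mp by (simp add: nth exA_block)
    show "lin_indep_family n (map (blk_f n r) (map (\<lambda>A. 1\<^sub>m d * A * 1\<^sub>m d) (exL n r s :: 'a mat list)))"
      unfolding mp by (rule exL_f)
    show "(\<Inter>i\<in>{..<n}. mat_kernel (transpose_mat (blk_D n r (map (\<lambda>A. 1\<^sub>m d * A * 1\<^sub>m d) (exL n r s :: 'a mat list) ! i)))) = {0\<^sub>v r}"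
      unfolding mp by (rule exL_D)
    show "subspace_dim r (vspan r (set (map (blk_b n r) (map (\<lambda>A. 1\<^sub>m d * A * 1\<^sub>m d) (exL n r s :: 'a mat list))))) = s"
      unfolding mp by (rule exL_b)
  qed (simp_all add: d_def)
qed

lemma exE_minor: "a < n+s+1 \<Longrightarrow> b < n+s+1 \<Longrightarrow> exE n r s (iota s n a) (rho r s n a) (kap r s n b) \<longleftrightarrow> a = b"
  unfolding exE_def iota_def rho_def kap_def using rs by auto

lemma exL_minor: "minorM n r s (tuple_coords n (n+r+2) (exL n r s :: 'a::field mat list)) = 1\<^sub>m (n+s+1)"
proof -
  have "minorM n r s (tuple_coords n (n+r+2) (exL n r s :: 'a mat list)) =
     mat (n+s+1) (n+s+1) (\<lambda>(a,b). (exL n r s :: 'a mat list) ! (iota s n a) $$ (rho r s n a, kap r s n b))"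
    by (rule minor_coords[OF rs])
  also have "\<dots> = 1\<^sub>m (n+s+1)"
  proof (rule eq_matI)
    fix a b assume ab: "a < dim_row (1\<^sub>m (n+s+1) :: 'a mat)" "b < dim_col (1\<^sub>m (n+s+1) :: 'a mat)"
    then have ab': "a < n+s+1" "b < n+s+1" by auto
    have "(exL n r s :: 'a mat list) ! (iota s n a) $$ (rho r s n a, kap r s n b) = (if a = b then 1 else 0)"
      using iota_lt[OF rs ab'(1)] rho_lt[OF rs ab'(1)] kap_lt[OF rs ab'(2)] exE_minor[OF ab']
      unfolding exL_def exA_def by simp
    then show "mat (n+s+1) (n+s+1) (\<lambda>(a,b). (exL n r s :: 'a mat list) ! (iota s n a) $$ (rho r s n a, kap r s n b)) $$ (a,b) = 1\<^sub>m (n+s+1) $$ (a,b)"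
      using ab' by simp
  qed auto
  finally show ?thesis .
qed

end

theorem lemma4p6:
  fixes n r s :: nat
  assumes alg_closed: "\<forall>p :: 'a::field_char_0 poly. degree p \<ge> 1 \<longrightarrow> (\<exists>x. poly p x = 0)"
    and "1 \<le> s" and "s \<le> r" and "r \<le> n"
  shows "holds_generally n (n+r+2) (X_nrs n r s :: 'a mat list set)
           (\<lambda>As. subspace_dim (n+r+2) (\<Inter>i\<in>{..<n}. mat_kernel (As!i)) = r - s + 1)"
proof -
  note rs = assms(2-4)
  define pp where "pp = (\<lambda>x::nat \<times> nat \<times> nat \<Rightarrow> 'a. det (minorM n r s x))"
  define U where "U = {x. \<exists>p\<in>{pp}. p x \<noteq> 0}"
  have zo: "zariski_open U" unfolding zariski_open_def U_def
    by (rule exI[of _ "{pp}"]) (simp add: pp_def polyfun_minor)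
  have ex: "\<exists>As\<in>(X_nrs n r s :: 'a mat list set). tuple_coords n (n+r+2) As \<in> U"
  proof (rule bexI[of _ "exL n r s"])
    show "exL n r s \<in> (X_nrs n r s :: 'a mat list set)" by (rule exL_X[OF rs])
    show "tuple_coords n (n+r+2) (exL n r s :: 'a mat list) \<in> U"
    proof -
      have "det (minorM n r s (tuple_coords n (n+r+2) (exL n r s :: 'a mat list))) = 1"
        unfolding exL_minor[OF rs, where 'a='a] by simp
      then show ?thesis unfolding U_def pp_def by simp
    qed
  qed
  have all: "\<forall>As\<in>(X_nrs n r s :: 'a mat list set). tuple_coords n (n+r+2) As \<in> U \<longrightarrow>
      subspace_dim (n+r+2) (\<Inter>i\<in>{..<n}. mat_kernel (As!i)) = r - s + 1"
  proof (intro ballI impI)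
    fix As :: "'a mat list" assume X: "As \<in> X_nrs n r s" and u: "tuple_coords n (n+r+2) As \<in> U"
    have car: "\<forall>i<n. As!i \<in> carrier_mat (n+r+2) (n+r+2)" using X unfolding X_nrs_def by auto
    have dt: "det (minorM n r s (tuple_coords n (n+r+2) As)) \<noteq> 0" using u unfolding U_def pp_def by simp
    have "subspace_dim (n+r+2) (\<Inter>i\<in>{..<n}. mat_kernel (As!i)) \<le> r+1-s" by (rule upper[OF rs car dt])
    moreover have "r+1-s \<le> subspace_dim (n+r+2) (\<Inter>i\<in>{..<n}. mat_kernel (As!i))" by (rule lower[OF rs X])
    ultimately show "subspace_dim (n+r+2) (\<Inter>i\<in>{..<n}. mat_kernel (As!i)) = r - s + 1" using rs by linarith
  qed
  show ?thesis unfolding holds_generally_def using zo ex all by blast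
qed

end
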